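(* Run UBEV-S on a contextual-bandit MDP $\mathcal M_C$ (see context). Outside of the failure event, UBEV-S has at most $\tilde O\!\left(\frac{SAH}{\mu_{\min}}\right)$ non-good episodes, where $\mu_{\min}=\min_s\mu(s)$.
   Context: $\mathcal M_C$ is a finite-horizon episodic MDP (finite state set with $S$ states, $A$ actions, horizon $H$, mean rewards in $[0,1]$) whose transitions satisfy $p(s'\mid s,a)=\mu(s')$ for all $s,a$, for a fixed distribution $\mu$ on states with $\mu_{\min}=\min_s\mu(s)>0$. UBEV-S (failure tolerance $\delta\in(0,1]$) is an optimistic algorithm that in each episode $k$ plays a policy $\pi_k$ mapping (state, timestep) to actions; $n_k(s,a)$ is the total number of visits to $(s,a)$ (aggregated over timesteps) before episode $k$; $w_{tk}(s,a)$ is the probability, in episode $k$ under $\pi_k$, of being in state $s$ at step $t$ and taking $a$. Outside of the failure event, in particular, $n_k(s,a)\ge\frac12\sum_{i<k}\sum_{t\in[H]}w_{ti}(s,a)-H\ln\frac{9SA}{\delta}$ for all $k,s,a$. Episode $k$ is good if the failure event does not occur and $n_k(s,\pi_k(s,t))\ge\frac14\sum_{i<k}\sum_{\tau\in[H]}w_{\tau i}(s,\pi_k(s,t))$ for all states $s$ and timesteps $t$; otherwise it is non-good. $\tilde O(\cdot)$ hides constants and factors polylogarithmic in quantities polynomial in $S,A,H,K,1/\delta$. *)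

theory Defs
  imports Complex_Main
begin

text \<open>Finite-horizon episodic MDP with finite state set Sts and finite action set Acts
  (states and actions encoded as natural numbers so that S and A can be quantified
  inside the statement).
  p0: initial state distribution; P s a s': transition probability.
  Timesteps are 1..H.\<close>

fun state_dist :: "nat set \<Rightarrow> (nat \<Rightarrow> real) \<Rightarrow> (nat \<Rightarrow> nat \<Rightarrow> nat \<Rightarrow> real)
                    \<Rightarrow> (nat \<Rightarrow> nat \<Rightarrow> nat) \<Rightarrow> nat \<Rightarrow> nat \<Rightarrow> real" where
  "state_dist Sts p0 P pol 0 s = 0"
| "state_dist Sts p0 P pol (Suc 0) s = p0 s"
| "state_dist Sts p0 P pol (Suc (Suc t)) s' =
     (\<Sum>s\<in>Sts. state_dist Sts p0 P pol (Suc t) s * P s (pol s (Suc t)) s')"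

definition occ :: "nat set \<Rightarrow> (nat \<Rightarrow> real) \<Rightarrow> (nat \<Rightarrow> nat \<Rightarrow> nat \<Rightarrow> real)
                    \<Rightarrow> (nat \<Rightarrow> nat \<Rightarrow> nat) \<Rightarrow> nat \<Rightarrow> nat \<Rightarrow> nat \<Rightarrow> real" where
  "occ Sts p0 P pol t s a = state_dist Sts p0 P pol t s * (if pol s t = a then 1 else 0)"

end

theory Submission
  imports Defs
begin

lemma count_bound:
  fixes f :: "nat \<Rightarrow> real"
  assumes fin: "finite B" and B1: "B \<subseteq> {1..}" and nn: "\<forall>i. f i \<ge> 0"
    and lb: "\<forall>i\<in>B. f i \<ge> m" and mpos: "m > 0" and M0: "M \<ge> 0"
    and ub: "\<forall>k\<in>B. (\<Sum>i\<in>{1..<k}. f i) < M"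
  shows "real (card B) \<le> M/m + 1"
proof (cases "B = {}")
  case True
  show ?thesis using True M0 mpos by simp
next
  case False
  define k where "k = Max B"
  have kB: "k \<in> B" using False fin k_def by simp
  have sub: "B - {k} \<subseteq> {1..<k}"
  proof
    fix x assume x: "x \<in> B - {k}"
    then have "x \<le> k" using fin k_def by simp
    with x B1 show "x \<in> {1..<k}" by auto
  qed
  have "(\<Sum>i\<in>B-{k}. f i) \<le> (\<Sum>i\<in>{1..<k}. f i)"
    by (rule sum_mono2) (use sub nn in auto)
  moreover have "real (card (B-{k})) * m \<le> (\<Sum>i\<in>B-{k}. f i)"
    using sum_bounded_below[of "B-{k}" m f] lb by auto
  moreover have "card (B-{k}) = card B - 1" using kB fin by simp
  moreover have "card B \<ge> 1" using kB fin
    by (metis False card_0_eq less_one not_less)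
  ultimately have "(real (card B) - 1) * m < M" using ub kB by auto
  then have "real (card B) - 1 < M/m" using mpos by (simp add: field_simps)
  then show ?thesis by simp
qed

lemma sd_mu:
  assumes "\<forall>s\<in>Sts. \<mu> s \<ge> 0" "(\<Sum>s\<in>Sts. \<mu> s) = 1"
    "\<forall>s\<in>Sts. p0 s = \<mu> s" "\<forall>s\<in>Sts. \<forall>a\<in>Acts. \<forall>s'\<in>Sts. P s a s' = \<mu> s'"
    "\<forall>s t. s \<in> Sts \<longrightarrow> t \<in> {1..H} \<longrightarrow> pol s t \<in> Acts"
  shows "1 \<le> t \<Longrightarrow> t \<le> H \<Longrightarrow> s \<in> Sts \<Longrightarrow> state_dist Sts p0 P pol t s = \<mu> s"
proof (induction t arbitrary: s rule: nat_less_induct)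
  case (1 t)
  show ?case
  proof (cases t)
    case 0 then show ?thesis using 1 by simp
  next
    case (Suc t1)
    show ?thesis
    proof (cases t1)
      case 0 then show ?thesis using 1 Suc assms by simp
    next
      case (Suc t2)
      have "state_dist Sts p0 P pol t s = (\<Sum>x\<in>Sts. state_dist Sts p0 P pol (Suc t2) x * P x (pol x (Suc t2)) s)"
        using Suc \<open>t = Suc t1\<close> by simp
      also have "\<dots> = (\<Sum>x\<in>Sts. \<mu> x * \<mu> s)"
      proof (rule sum.cong)
        fix x assume x: "x \<in> Sts"
        have "state_dist Sts p0 P pol (Suc t2) x = \<mu> x"
          using 1 Suc \<open>t = Suc t1\<close> x by auto
        moreover have "pol x (Suc t2) \<in> Acts" using assms(5) x 1 Suc \<open>t = Suc t1\<close> by auto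
        ultimately show "state_dist Sts p0 P pol (Suc t2) x * P x (pol x (Suc t2)) s = \<mu> x * \<mu> s"
          using assms(4) x 1 by auto
      qed simp
      also have "\<dots> = \<mu> s" using assms(2) by (simp add: sum_distrib_right[symmetric])
      finally show ?thesis .
    qed
  qed
qed

theorem lemma11:
  "\<exists>(C::real) (p::nat). \<forall>(Sts::nat set) (Acts::nat set) (\<mu>::nat \<Rightarrow> real) (p0::nat \<Rightarrow> real)
      (P::nat \<Rightarrow> nat \<Rightarrow> nat \<Rightarrow> real) (H::nat) (K::nat) (\<delta>::real)
      (\<pi>::nat \<Rightarrow> nat \<Rightarrow> nat \<Rightarrow> nat) (n::nat \<Rightarrow> nat \<Rightarrow> nat \<Rightarrow> nat).
    finite Sts \<and> Sts \<noteq> {} \<and> finite Acts \<and> Acts \<noteq> {} \<and>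
    (\<forall>s\<in>Sts. \<mu> s \<ge> 0) \<and> (\<Sum>s\<in>Sts. \<mu> s) = 1 \<and> Min (\<mu> ` Sts) > 0 \<and>
    (\<forall>s\<in>Sts. p0 s = \<mu> s) \<and> (\<forall>s\<in>Sts. \<forall>a\<in>Acts. \<forall>s'\<in>Sts. P s a s' = \<mu> s') \<and>
    (\<forall>k s t. s \<in> Sts \<longrightarrow> t \<in> {1..H} \<longrightarrow> \<pi> k s t \<in> Acts) \<and>
    H \<ge> 1 \<and> 0 < \<delta> \<and> \<delta> \<le> 1 \<and>
    (\<forall>k. \<forall>s\<in>Sts. \<forall>a\<in>Acts. real (n k s a) \<ge>
        1/2 * (\<Sum>i\<in>{1..<k}. \<Sum>t\<in>{1..H}. occ Sts p0 P (\<pi> i) t s a)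
        - real H * ln (9 * real (card Sts) * real (card Acts) / \<delta>))
    \<longrightarrow> real (card {k\<in>{1..K}. \<exists>s\<in>Sts. \<exists>t\<in>{1..H}.
            real (n k s (\<pi> k s t)) <
              1/4 * (\<Sum>i\<in>{1..<k}. \<Sum>\<tau>\<in>{1..H}. occ Sts p0 P (\<pi> i) \<tau> s (\<pi> k s t))})
        \<le> C * (real (card Sts) * real (card Acts) * real H / Min (\<mu> ` Sts))
             * (1 + ln (real (card Sts) * real (card Acts) * real H * real K / \<delta>)) ^ p"
proof (rule exI[where x="40::real"], rule exI[where x="1::nat"], intro allI impI)
  fix Sts Acts :: "nat set" and \<mu> p0 :: "nat \<Rightarrow> real" and P :: "nat \<Rightarrow> nat \<Rightarrow> nat \<Rightarrow> real"
    and H K :: nat and \<delta> :: real and \<pi> n :: "nat \<Rightarrow> nat \<Rightarrow> nat \<Rightarrow> nat"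
  assume A: "finite Sts \<and> Sts \<noteq> {} \<and> finite Acts \<and> Acts \<noteq> {} \<and>
    (\<forall>s\<in>Sts. \<mu> s \<ge> 0) \<and> (\<Sum>s\<in>Sts. \<mu> s) = 1 \<and> Min (\<mu> ` Sts) > 0 \<and>
    (\<forall>s\<in>Sts. p0 s = \<mu> s) \<and> (\<forall>s\<in>Sts. \<forall>a\<in>Acts. \<forall>s'\<in>Sts. P s a s' = \<mu> s') \<and>
    (\<forall>k s t. s \<in> Sts \<longrightarrow> t \<in> {1..H} \<longrightarrow> \<pi> k s t \<in> Acts) \<and>
    H \<ge> 1 \<and> 0 < \<delta> \<and> \<delta> \<le> 1 \<and>
    (\<forall>k. \<forall>s\<in>Sts. \<forall>a\<in>Acts. real (n k s a) \<ge>
        1/2 * (\<Sum>i\<in>{1..<k}. \<Sum>t\<in>{1..H}. occ Sts p0 P (\<pi> i) t s a)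
        - real H * ln (9 * real (card Sts) * real (card Acts) / \<delta>))"
  define S where "S = real (card Sts)"
  define Ac where "Ac = real (card Acts)"
  define m where "m = Min (\<mu> ` Sts)"
  define L where "L = real H * ln (9 * S * Ac / \<delta>)"
  define X where "X = ln (S * Ac * real H * real K / \<delta>)"
  define NG where "NG = {k\<in>{1..K}. \<exists>s\<in>Sts. \<exists>t\<in>{1..H}.
            real (n k s (\<pi> k s t)) <
              1/4 * (\<Sum>i\<in>{1..<k}. \<Sum>\<tau>\<in>{1..H}. occ Sts p0 P (\<pi> i) \<tau> s (\<pi> k s t))}"
  have finS: "finite Sts" and finA: "finite Acts" and mpos: "m > 0" and H1: "H \<ge> 1"
    and dpos: "\<delta> > 0" and d1: "\<delta> \<le> 1"
    using A m_def by auto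
  have Spos: "S \<ge> 1" using A S_def by (simp add: Suc_leI card_gt_0_iff)
  have Apos: "Ac \<ge> 1" using A Ac_def by (simp add: Suc_leI card_gt_0_iff)
  have mle: "\<forall>s\<in>Sts. m \<le> \<mu> s" using finS m_def by simp
  have m1: "m \<le> 1"
  proof -
    obtain s where s: "s \<in> Sts" using A by auto
    have "\<mu> s \<le> (\<Sum>x\<in>Sts. \<mu> x)"
      using s finS A by (intro member_le_sum) auto
    then show ?thesis using mle s A by force
  qed
  have occ_eq: "occ Sts p0 P (\<pi> i) \<tau> s a = \<mu> s * (if \<pi> i s \<tau> = a then 1 else 0)"
    if "\<tau> \<in> {1..H}" "s \<in> Sts" for i \<tau> s a
  proof -
    have "state_dist Sts p0 P (\<pi> i) \<tau> s = \<mu> s"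
      by (rule sd_mu[of Sts \<mu> p0 Acts P H]) (use A that in auto)
    then show ?thesis by (simp add: occ_def)
  qed
  define f where "f s a i = (\<Sum>\<tau>\<in>{1..H}. occ Sts p0 P (\<pi> i) \<tau> s a)" for s a i
  have f_nn: "f s a i \<ge> 0" if "s \<in> Sts" for s a i
    unfolding f_def using occ_eq that A by (intro sum_nonneg) auto
  have f_lb: "f s a i \<ge> m" if "s \<in> Sts" "t \<in> {1..H}" "\<pi> i s t = a" for s a i t
  proof -
    have "occ Sts p0 P (\<pi> i) t s a \<le> f s a i"
      unfolding f_def using that occ_eq A by (intro member_le_sum) auto
    moreover have "occ Sts p0 P (\<pi> i) t s a = \<mu> s" using occ_eq that by simp
    ultimately show ?thesis using mle that by force
  qed
  define B where "B s a = {k\<in>{1..K}. (\<exists>t\<in>{1..H}. \<pi> k s t = a) \<and> (\<Sum>i\<in>{1..<k}. f s a i) < 4 * L}" for s a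
  have NG_sub: "NG \<subseteq> (\<Union>p\<in>Sts \<times> Acts. B (fst p) (snd p))"
  proof
    fix k assume "k \<in> NG"
    then obtain s t where k: "k \<in> {1..K}" and s: "s \<in> Sts" and t: "t \<in> {1..H}"
      and lt: "real (n k s (\<pi> k s t)) < 1/4 * (\<Sum>i\<in>{1..<k}. f s (\<pi> k s t) i)"
      unfolding NG_def f_def by auto
    have a: "\<pi> k s t \<in> Acts" using A s t by auto
    have "real (n k s (\<pi> k s t)) \<ge> 1/2 * (\<Sum>i\<in>{1..<k}. f s (\<pi> k s t) i) - L"
      using A s a unfolding f_def L_def S_def Ac_def by blast
    with lt have "(\<Sum>i\<in>{1..<k}. f s (\<pi> k s t) i) < 4 * L" by linarith
    then have "k \<in> B s (\<pi> k s t)" unfolding B_def using k t by auto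
    then show "k \<in> (\<Union>p\<in>Sts \<times> Acts. B (fst p) (snd p))" using s a by force
  qed
  have Bb: "real (card (B s a)) \<le> 4 * L / m + 1" if "s \<in> Sts" for s a
  proof (rule count_bound[where f = "f s a"])
    show "finite (B s a)" unfolding B_def by simp
    show "B s a \<subseteq> {1..}" unfolding B_def by auto
    show "\<forall>i. 0 \<le> f s a i" using f_nn that by auto
    show "\<forall>i\<in>B s a. m \<le> f s a i" using f_lb that unfolding B_def by blast
    show "0 < m" by (rule mpos)
    have "Ac * (S * 9) \<ge> 1 * (1 * 1)" using Spos Apos by (intro mult_mono) auto
    then show "0 \<le> 4 * L" unfolding L_def using Spos Apos dpos d1
      by (intro mult_nonneg_nonneg) (auto intro!: ln_ge_zero simp: field_simps)
    show "\<forall>k\<in>B s a. sum (f s a) {1..<k} < 4 * L" unfolding B_def by auto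
  qed
  have "card NG \<le> card (\<Union>p\<in>Sts \<times> Acts. B (fst p) (snd p))"
  proof (rule card_mono)
    show "finite (\<Union>p\<in>Sts \<times> Acts. B (fst p) (snd p))"
      using finS finA by (intro finite_UN_I) (auto simp: B_def)
  qed (rule NG_sub)
  also have "\<dots> \<le> (\<Sum>p\<in>Sts \<times> Acts. card (B (fst p) (snd p)))"
    by (rule card_UN_le) (use finS finA in simp)
  finally have "real (card NG) \<le> (\<Sum>p\<in>Sts \<times> Acts. real (card (B (fst p) (snd p))))"
    by (metis of_nat_le_iff of_nat_sum)
  also have "\<dots> \<le> (\<Sum>p\<in>Sts \<times> Acts. 4 * L / m + 1)"
    by (rule sum_mono) (use Bb in auto)
  also have "\<dots> = S * Ac * (4 * L / m + 1)"
    by (simp add: S_def Ac_def card_cartesian_product)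
  finally have main: "real (card NG) \<le> S * Ac * (4 * L / m + 1)" .
  have final: "real (card NG) \<le> 40 * (S * Ac * real H / m) * (1 + X) ^ 1"
  proof (cases "K = 0")
    case True
    then have "NG = {}" unfolding NG_def by auto
    moreover have "X = 0" using True X_def by simp
    ultimately show ?thesis using mpos Spos Apos H1 by simp
  next
    case False
    have prodpos: "S * Ac * real H * real K / \<delta> \<ge> 1"
    proof -
      have "S * Ac * real H * real K \<ge> 1 * 1 * 1 * 1"
        using Spos Apos H1 False
        by (intro mult_mono) auto
      then have "S * Ac * real H * real K \<ge> \<delta>" using d1 by linarith
      then show ?thesis using dpos by simp
    qed
    have X0: "X \<ge> 0" unfolding X_def using prodpos by simp
    have "ln (9 * S * Ac / \<delta>) = ln 9 + ln (S * Ac / \<delta>)"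
    proof -
      have "9 * S * Ac / \<delta> = 9 * (S * Ac / \<delta>)" by simp
      moreover have "S * Ac / \<delta> > 0" using Spos Apos dpos by simp
      ultimately show ?thesis using Spos Apos dpos by (simp only: ln_mult) simp
    qed
    also have "ln 9 \<le> (8::real)" using ln_le_minus_one[of 9] by simp
    also have "ln (S * Ac / \<delta>) \<le> X"
    proof -
      have "S * Ac / \<delta> \<le> S * Ac * real H * real K / \<delta>"
      proof (rule divide_right_mono)
        have "real H * real K \<ge> 1 * 1" using H1 False by (intro mult_mono) auto
        then have "S * Ac * 1 \<le> S * Ac * (real H * real K)"
          using Spos Apos by (intro mult_left_mono) auto
        then show "S * Ac \<le> S * Ac * real H * real K" by (simp add: mult.assoc)
      qed (use dpos in simp)
      then show ?thesis unfolding X_def using Spos Apos dpos prodpos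
        by (subst ln_le_cancel_iff) auto
    qed
    finally have lnb: "ln (9 * S * Ac / \<delta>) \<le> 8 + X" by simp
    have Lb: "L \<le> real H * (8 + X)" unfolding L_def using lnb H1 by (simp add: mult_left_mono)
    have "4 * L / m + 1 \<le> 4 * real H * (8 + X) / m + real H / m"
    proof -
      have "4 * L / m \<le> 4 * real H * (8 + X) / m" using Lb mpos by (simp add: divide_right_mono)
      moreover have "1 \<le> real H / m" using H1 m1 mpos by (simp add: field_simps)
      ultimately show ?thesis by linarith
    qed
    also have "\<dots> = (real H / m) * (33 + 4 * X)" using mpos by (simp add: field_simps)
    also have "\<dots> \<le> (real H / m) * (40 * (1 + X))"
      using X0 mpos H1 by (intro mult_left_mono) auto
    finally have "4 * L / m + 1 \<le> (real H / m) * (40 * (1 + X))" .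
    then have "S * Ac * (4 * L / m + 1) \<le> S * Ac * ((real H / m) * (40 * (1 + X)))"
      using Spos Apos by (intro mult_left_mono) auto
    with main show ?thesis by (simp add: field_simps)
  qed
  then show "real (card {k\<in>{1..K}. \<exists>s\<in>Sts. \<exists>t\<in>{1..H}.
            real (n k s (\<pi> k s t)) <
              1/4 * (\<Sum>i\<in>{1..<k}. \<Sum>\<tau>\<in>{1..H}. occ Sts p0 P (\<pi> i) \<tau> s (\<pi> k s t))})
        \<le> 40 * (real (card Sts) * real (card Acts) * real H / Min (\<mu> ` Sts))
             * (1 + ln (real (card Sts) * real (card Acts) * real H * real K / \<delta>)) ^ 1"
    unfolding NG_def S_def Ac_def m_def X_def .
qed

end
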